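(* Every transformer with average hard attention (AHA), as defined in the context, can be simulated by $\mathbf{PFO}^2$: each map $\bar w\mapsto H^{(\ell)}(\bar w)$ and the output map $\bar w\mapsto o(\bar w)$ is simulated by $\mathbf{PFO}^2$ over $\bar\Sigma$.
   Context: Fixed precision: $\mathbb{F}$ is a fixed finite set of floating-point values containing $0,1,-1,\infty,-\infty$; every arithmetic operation used below returns a value in $\mathbb{F}$, with conventions $\infty+f=\infty$, $-\infty+f=-\infty$ for $f\ne\mp\infty$; $f\cdot(\pm\infty)=\pm\infty$ for $f>0$ and $=\mp\infty$ for $f<0$; $f/\infty=0$ for finite $f$; $\exp(\infty)=\infty$, $\exp(-\infty)=0$. Under fixed precision the attention weights at any position have at most $N_{\max}=\lfloor \min(1,\max(\mathbb{F}\setminus\{\infty\}))/\min(\mathbb{F}_{>0})\rfloor$ nonzero entries, and a sum of nonnegative elements of $\mathbb{F}$ is determined by how many summands take each value, counted up to a fixed threshold. Given a finite alphabet $\Sigma$ and fresh $\mathrm{EOS}\notin\Sigma$, $\bar\Sigma=\Sigma\cup\{\mathrm{EOS}\}$ and $\bar w=w_1\cdots w_Nw_{N+1}$ with $w_{N+1}=\mathrm{EOS}$. A transformer of width $D$ and depth $L$ (parameters in $\mathbb{F}$) computes $H^{(\ell)}(\bar w)\in\mathbb{F}^{D\times(N+1)}$, $\ell\in\{0,0.5,\dots,L\}$: $H^{(0)}_{:,n}=e(w_n)$; $H^{(\ell+0.5)}=\mathrm{LN}(A^{(\ell)}(H^{(\ell)})+H^{(\ell)})$, $H^{(\ell+1)}=\mathrm{LN}(F^{(\ell)}(H^{(\ell+0.5)})+H^{(\ell+0.5)})$,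 with $\mathrm{LN}$ columnwise layer normalization, $F^{(\ell)}(H)_{:,n}=W^{F2}\mathrm{ReLU}(W^{F1}H_{:,n}+b^{F1})+b^{F2}$, $Q=W^QH,K=W^KH,V=W^VH$, $S_{n,m}=Q_{:,n}\cdot K_{:,m}/\sqrt D$, $A(H)_{:,n}=\sum_{m<n}\alpha_{n,m}V_{:,m}$, and output $o(\bar w)=\theta^\top H^{(L)}_{:,N+1}+b$. With average hard attention the weights are $\alpha_{n,m}=\mathbf{1}[S_{n,m}=\max_{i<n}S_{n,i}]\,/\,\sum_{j<n}\mathbf{1}[S_{n,j}=\max_{i<n}S_{n,i}]$ for $m<n$. $\mathbf{PFO}^2$ over $\Gamma$: formulas in the two variables $x,y$ (re-quantifiable), atomic formulas $\pi_a(z)$ ($a\in\Gamma$) and $z<z'$, closed under $\wedge,\neg$, $\exists y<x:\phi(x,y)$, $\exists x<y:\phi(x,y)$, and, for $\phi(x)$ with only free variable $x$, $\exists x<y:\phi(x)$ and $\exists x:\phi(x)$ (symmetrically in $x,y$); standard semantics. A map $G$ assigning to each $\bar w$ a matrix $G(\bar w)\in\mathbb{F}^{D\times(N+1)}$ is simulated by $\mathbf{PFO}^2$ if for every $d$ and $f\in\mathbb{F}$ there is a $\mathbf{PFO}^2$ formula $\phi(x)$ over $\bar\Sigma$ with one free variable such that for all $w$ and $n\in\{1,\dots,N+1\}$: $G_{d,n}(\bar w)=f$ iff $\bar w,n\models\phi(x)$ (for the scalar $o$, take $n=N+1$). *)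

theory Defs
  imports "HOL-Analysis.Analysis" "HOL-Library.Extended_Real"
begin

text \<open>Every arithmetic operation is an arbitrary (rounding) function whose
results lie in F, subject to the conventions for infinities stated in the paper.
Multi-term sums are computed by an abstract summation operation fsum on lists
(in the given order), again with values in F.\<close>

record fparith =
  Fset   :: "ereal set"
  fadd   :: "ereal \<Rightarrow> ereal \<Rightarrow> ereal"
  fsub   :: "ereal \<Rightarrow> ereal \<Rightarrow> ereal"
  fmul   :: "ereal \<Rightarrow> ereal \<Rightarrow> ereal"
  fdiv   :: "ereal \<Rightarrow> ereal \<Rightarrow> ereal"
  fsqrt  :: "ereal \<Rightarrow> ereal"
  fexp   :: "ereal \<Rightarrow> ereal"
  fsum   :: "ereal list \<Rightarrow> ereal"
  fconst :: "real \<Rightarrow> ereal"   \<comment> \<open>representation in F of a real constant (e.g. D, sqrt D)\<close>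

definition Nmax :: "fparith \<Rightarrow> nat" where
  "Nmax A = nat \<lfloor>real_of_ereal (min 1 (Max (Fset A - {\<infinity>})))
                 / real_of_ereal (Min {f \<in> Fset A. f > 0})\<rfloor>"

definition fixed_precision :: "fparith \<Rightarrow> bool" where
  "fixed_precision A \<longleftrightarrow>
     finite (Fset A) \<and> {0, 1, -1, \<infinity>, -\<infinity>} \<subseteq> Fset A
     \<comment> \<open>every operation returns a value in F\<close>
   \<and> (\<forall>x y. fadd A x y \<in> Fset A \<and> fsub A x y \<in> Fset A \<and> fmul A x y \<in> Fset A \<and> fdiv A x y \<in> Fset A)
   \<and> (\<forall>x. fsqrt A x \<in> Fset A \<and> fexp A x \<in> Fset A)
   \<and> (\<forall>xs. fsum A xs \<in> Fset A) \<and> (\<forall>r. fconst A r \<in> Fset A)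
     \<comment> \<open>conventions for infinities\<close>
   \<and> (\<forall>f\<in>Fset A. f \<noteq> -\<infinity> \<longrightarrow> fadd A \<infinity> f = \<infinity> \<and> fadd A f \<infinity> = \<infinity>)
   \<and> (\<forall>f\<in>Fset A. f \<noteq> \<infinity> \<longrightarrow> fadd A (-\<infinity>) f = -\<infinity> \<and> fadd A f (-\<infinity>) = -\<infinity>)
   \<and> (\<forall>f\<in>Fset A. f > 0 \<longrightarrow> fmul A f \<infinity> = \<infinity> \<and> fmul A \<infinity> f = \<infinity>
                         \<and> fmul A f (-\<infinity>) = -\<infinity> \<and> fmul A (-\<infinity>) f = -\<infinity>)
   \<and> (\<forall>f\<in>Fset A. f < 0 \<longrightarrow> fmul A f \<infinity> = -\<infinity> \<and> fmul A \<infinity> f = -\<infinity>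
                         \<and> fmul A f (-\<infinity>) = \<infinity> \<and> fmul A (-\<infinity>) f = \<infinity>)
   \<and> (\<forall>f\<in>Fset A. \<bar>f\<bar> \<noteq> \<infinity> \<longrightarrow> fdiv A f \<infinity> = 0)
   \<and> fexp A \<infinity> = \<infinity> \<and> fexp A (-\<infinity>) = 0
     \<comment> \<open>average-hard-attention weights (1[tied]/#tied) have at most Nmax nonzero entries\<close>
   \<and> (\<forall>xs. set xs \<subseteq> {0, 1} \<longrightarrow>
        card {j. j < length xs \<and> (if xs ! j = 1 then fdiv A 1 (fsum A xs) else 0) \<noteq> 0} \<le> Nmax A)
     \<comment> \<open>a sum of nonnegative elements of F is determined by the value counts up to a threshold\<close>
   \<and> (\<exists>\<tau>::nat. \<forall>xs ys. (\<forall>v\<in>set xs. v \<in> Fset A \<and> v \<ge> 0) \<longrightarrow> (\<forall>v\<in>set ys. v \<in> Fset A \<and> v \<ge> 0)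
        \<longrightarrow> (\<forall>v. min (count_list xs v) \<tau> = min (count_list ys v) \<tau>) \<longrightarrow> fsum A xs = fsum A ys)"

definition vsum :: "fparith \<Rightarrow> ereal list \<Rightarrow> ereal" where
  "vsum A xs = (if xs = [] then 0 else fsum A xs)"

definition dotp :: "fparith \<Rightarrow> nat \<Rightarrow> (nat \<Rightarrow> ereal) \<Rightarrow> (nat \<Rightarrow> ereal) \<Rightarrow> ereal" where
  "dotp A n x y = vsum A (map (\<lambda>j. fmul A (x j) (y j)) [0..<n])"

definition matvec :: "fparith \<Rightarrow> nat \<Rightarrow> (nat \<Rightarrow> nat \<Rightarrow> ereal) \<Rightarrow> (nat \<Rightarrow> ereal) \<Rightarrow> nat \<Rightarrow> ereal" where
  "matvec A n W x i = dotp A n (W i) x"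

definition layernorm :: "fparith \<Rightarrow> nat \<Rightarrow> (nat \<Rightarrow> ereal) \<Rightarrow> nat \<Rightarrow> ereal" where
  "layernorm A D x =
     (let \<mu> = fdiv A (vsum A (map x [0..<D])) (fconst A (real D));
          c = (\<lambda>d. fsub A (x d) \<mu>);
          \<sigma>2 = fdiv A (vsum A (map (\<lambda>d. fmul A (c d) (c d)) [0..<D])) (fconst A (real D))
      in (\<lambda>d. fdiv A (c d) (fsqrt A \<sigma>2)))"

record tlayer =
  WQ  :: "nat \<Rightarrow> nat \<Rightarrow> ereal"
  WK  :: "nat \<Rightarrow> nat \<Rightarrow> ereal"
  WV  :: "nat \<Rightarrow> nat \<Rightarrow> ereal"
  Dff :: nat
  WF1 :: "nat \<Rightarrow> nat \<Rightarrow> ereal"       \<comment> \<open>Dff x D\<close>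
  bF1 :: "nat \<Rightarrow> ereal"
  WF2 :: "nat \<Rightarrow> nat \<Rightarrow> ereal"       \<comment> \<open>D x Dff\<close>
  bF2 :: "nat \<Rightarrow> ereal"

record 'a transformer =
  width  :: nat
  depth  :: nat
  emb    :: "'a option \<Rightarrow> nat \<Rightarrow> ereal"  \<comment> \<open>e; None plays the role of EOS\<close>
  layers :: "nat \<Rightarrow> tlayer"
  theta  :: "nat \<Rightarrow> ereal"
  bout   :: ereal

definition wf_transformer :: "fparith \<Rightarrow> 'a transformer \<Rightarrow> bool" where
  "wf_transformer A T \<longleftrightarrow>
     (let D = width T; F = Fset A in
       D > 0
     \<and> (\<forall>s. \<forall>d<D. emb T s d \<in> F)
     \<and> (\<forall>d<D. theta T d \<in> F) \<and> bout T \<in> F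
     \<and> (\<forall>l<depth T. let P = layers T l in
           (\<forall>i<D. \<forall>j<D. WQ P i j \<in> F \<and> WK P i j \<in> F \<and> WV P i j \<in> F)
         \<and> (\<forall>i<Dff P. \<forall>j<D. WF1 P i j \<in> F \<and> WF2 P j i \<in> F)
         \<and> (\<forall>i<Dff P. bF1 P i \<in> F) \<and> (\<forall>j<D. bF2 P j \<in> F)))"

definition wbar :: "'a list \<Rightarrow> 'a option list" where
  "wbar w = map Some w @ [None]"

text \<open>Columns are indexed 0..N (paper positions 1..N+1).  H n is the n-th column.\<close>
type_synonym hmat = "nat \<Rightarrow> nat \<Rightarrow> ereal"

definition aha_attention :: "fparith \<Rightarrow> nat \<Rightarrow> tlayer \<Rightarrow> hmat \<Rightarrow> hmat" where
  "aha_attention A D P H =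
     (let Q = (\<lambda>n. matvec A D (WQ P) (H n));
          K = (\<lambda>n. matvec A D (WK P) (H n));
          V = (\<lambda>n. matvec A D (WV P) (H n));
          S = (\<lambda>n m. fdiv A (dotp A D (Q n) (K m)) (fconst A (sqrt (real D))));
          tied = (\<lambda>n m. S n m = Max ((S n) ` {..<n}));
          ind = (\<lambda>n m. if tied n m then (1::ereal) else 0);
          \<alpha> = (\<lambda>n m. if tied n m then fdiv A 1 (fsum A (map (ind n) [0..<n])) else 0)
      in (\<lambda>n d. vsum A (map (\<lambda>m. fmul A (\<alpha> n m) (V m d))
                              (filter (\<lambda>m. \<alpha> n m \<noteq> 0) [0..<n]))))"

definition ffn :: "fparith \<Rightarrow> nat \<Rightarrow> tlayer \<Rightarrow> (nat \<Rightarrow> ereal) \<Rightarrow> nat \<Rightarrow> ereal" where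
  "ffn A D P h =
     (let z = (\<lambda>i. max 0 (fadd A (matvec A D (WF1 P) h i) (bF1 P i)))
      in (\<lambda>d. fadd A (matvec A (Dff P) (WF2 P) z d) (bF2 P d)))"

text \<open>hidden A T w k is H^(k/2)(wbar w), as a function column index n, row index d.\<close>
fun hidden :: "fparith \<Rightarrow> 'a transformer \<Rightarrow> 'a list \<Rightarrow> nat \<Rightarrow> hmat" where
  "hidden A T w 0 = (\<lambda>n d. emb T (wbar w ! n) d)"
| "hidden A T w (Suc k) =
     (let D = width T; P = layers T (k div 2); H = hidden A T w k in
      if even k then
        (let Att = aha_attention A D P H in
         (\<lambda>n. layernorm A D (\<lambda>d. fadd A (Att n d) (H n d))))
      else
        (\<lambda>n. layernorm A D (\<lambda>d. fadd A (ffn A D P (H n) d) (H n d))))"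

definition tf_output :: "fparith \<Rightarrow> 'a transformer \<Rightarrow> 'a list \<Rightarrow> ereal" where
  "tf_output A T w = fadd A (dotp A (width T) (theta T) (hidden A T w (2 * depth T) (length w))) (bout T)"

datatype var = VX | VY

fun other :: "var \<Rightarrow> var" where
  "other VX = VY" | "other VY = VX"

datatype 'g pfo =
    Sym 'g var
  | Lt var var
  | Conj "'g pfo" "'g pfo"
  | Neg "'g pfo"
  | ExLt var "'g pfo"
  | ExAll var "'g pfo"

fun fv :: "'g pfo \<Rightarrow> var set" where
  "fv (Sym a v) = {v}"
| "fv (Lt u v) = {u, v}"
| "fv (Conj \<phi> \<psi>) = fv \<phi> \<union> fv \<psi>"
| "fv (Neg \<phi>) = fv \<phi>"
| "fv (ExLt v \<phi>) = (fv \<phi> - {v}) \<union> {other v}"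
| "fv (ExAll v \<phi>) = fv \<phi> - {v}"

fun is_pfo2 :: "'g pfo \<Rightarrow> bool" where
  "is_pfo2 (Sym a v) = True"
| "is_pfo2 (Lt u v) = True"
| "is_pfo2 (Conj \<phi> \<psi>) = (is_pfo2 \<phi> \<and> is_pfo2 \<psi>)"
| "is_pfo2 (Neg \<phi>) = is_pfo2 \<phi>"
| "is_pfo2 (ExLt v \<phi>) = is_pfo2 \<phi>"
| "is_pfo2 (ExAll v \<phi>) = (is_pfo2 \<phi> \<and> fv \<phi> \<subseteq> {v})"

fun sat :: "'g list \<Rightarrow> (var \<Rightarrow> nat) \<Rightarrow> 'g pfo \<Rightarrow> bool" where
  "sat w s (Sym a v) = (s v < length w \<and> w ! s v = a)"
| "sat w s (Lt u v) = (s u < s v)"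
| "sat w s (Conj \<phi> \<psi>) = (sat w s \<phi> \<and> sat w s \<psi>)"
| "sat w s (Neg \<phi>) = (\<not> sat w s \<phi>)"
| "sat w s (ExLt v \<phi>) = (\<exists>i < s (other v). sat w (s(v := i)) \<phi>)"
| "sat w s (ExAll v \<phi>) = (\<exists>i < length w. sat w (s(v := i)) \<phi>)"

text \<open>w, n |= \<phi>(x)  (positions 0-based).\<close>
definition models_at :: "'g list \<Rightarrow> nat \<Rightarrow> 'g pfo \<Rightarrow> bool" where
  "models_at w n \<phi> = sat w (\<lambda>_. n) \<phi>"

definition simulated_PFO2 :: "ereal set \<Rightarrow> nat \<Rightarrow> ('a list \<Rightarrow> hmat) \<Rightarrow> bool" where
  "simulated_PFO2 F D G \<longleftrightarrow>
     (\<forall>d<D. \<forall>f\<in>F. \<exists>\<phi> :: 'a option pfo. is_pfo2 \<phi> \<and> fv \<phi> \<subseteq> {VX} \<and>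
        (\<forall>w. \<forall>n \<le> length w. G w n d = f \<longleftrightarrow> models_at (wbar w) n \<phi>))"

definition simulated_PFO2_scalar :: "ereal set \<Rightarrow> ('a list \<Rightarrow> ereal) \<Rightarrow> bool" where
  "simulated_PFO2_scalar F g \<longleftrightarrow>
     (\<forall>f\<in>F. \<exists>\<phi> :: 'a option pfo. is_pfo2 \<phi> \<and> fv \<phi> \<subseteq> {VX} \<and>
        (\<forall>w. g w = f \<longleftrightarrow> models_at (wbar w) (length w) \<phi>))"

end

theory Submission
  imports Defs
begin


fun swp :: "'g pfo \<Rightarrow> 'g pfo" where
  "swp (Sym a v) = Sym a (other v)"
| "swp (Lt u v) = Lt (other u) (other v)"
| "swp (Conj p q) = Conj (swp p) (swp q)"
| "swp (Neg p) = Neg (swp p)"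
| "swp (ExLt v p) = ExLt (other v) (swp p)"
| "swp (ExAll v p) = ExAll (other v) (swp p)"

lemma other_other[simp]: "other (other v) = v"
  by (cases v) auto

lemma other_inj[simp]: "(other u = other v) = (u = v)"
  by (cases u; cases v) auto

lemma fv_swp: "fv (swp p) = other ` fv p"
  by (induction p) (auto simp: image_Un image_set_diff inj_def)

lemma pfo2_swp: "is_pfo2 (swp p) = is_pfo2 p"
proof (induction p)
  case (ExAll v p)
  have "(other ` fv p \<subseteq> {other v}) = (fv p \<subseteq> {v})" by auto
  then show ?case using ExAll by (simp add: fv_swp)
qed auto

lemma fun_upd_other: "(s(other v := i)) \<circ> other = (s \<circ> other)(v := i)"
  by (rule ext) (auto simp: fun_upd_def)

lemma sat_swp: "sat w s (swp p) = sat w (s \<circ> other) p"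
  by (induction p arbitrary: s) (simp_all add: fun_upd_other)

lemma sat_fv: "(\<forall>v\<in>fv p. s v = s' v) \<Longrightarrow> sat w s p = sat w s' p"
proof (induction p arbitrary: s s')
  case (ExLt v p)
  have "\<And>i. sat w (s(v := i)) p = sat w (s'(v := i)) p"
    using ExLt by (intro ExLt.IH) auto
  moreover have "s (other v) = s' (other v)" using ExLt.prems by auto
  ultimately show ?case by simp
next
  case (ExAll v p)
  have "\<And>i. sat w (s(v := i)) p = sat w (s'(v := i)) p"
    using ExAll by (intro ExAll.IH) auto
  then show ?case by simp
next
  case (Conj p q)
  have "sat w s p = sat w s' p" using Conj.prems by (intro Conj.IH(1)) auto
  moreover have "sat w s q = sat w s' q" using Conj.prems by (intro Conj.IH(2)) auto
  ultimately show ?case by simp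
qed auto

definition defin :: "('a list \<Rightarrow> nat \<Rightarrow> bool) \<Rightarrow> bool" where
  "defin P \<longleftrightarrow> (\<exists>\<phi> :: 'a option pfo. is_pfo2 \<phi> \<and> fv \<phi> \<subseteq> {VX} \<and>
      (\<forall>w n. n \<le> length w \<longrightarrow> (P w n \<longleftrightarrow> models_at (wbar w) n \<phi>)))"

lemma defin_cong: "defin P \<Longrightarrow> (\<And>w n. n \<le> length w \<Longrightarrow> P w n = Q w n) \<Longrightarrow> defin Q"
  unfolding defin_def by metis

lemma defin_const: "defin (\<lambda>w n. b)"
proof (cases b)
  case True
  show ?thesis unfolding defin_def
    by (rule exI[of _ "Neg (Lt VX VX)"]) (simp add: True models_at_def)
next
  case False
  show ?thesis unfolding defin_def
    by (rule exI[of _ "Lt VX VX"]) (simp add: False models_at_def)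
qed

lemma defin_conj: "defin P \<Longrightarrow> defin Q \<Longrightarrow> defin (\<lambda>w n. P w n \<and> Q w n)"
  unfolding defin_def
  apply (elim exE conjE)
  subgoal for p q by (rule exI[of _ "Conj p q"]) (simp add: models_at_def)
  done

lemma defin_neg: "defin P \<Longrightarrow> defin (\<lambda>w n. \<not> P w n)"
  unfolding defin_def
  apply (elim exE conjE)
  subgoal for p by (rule exI[of _ "Neg p"]) (simp add: models_at_def)
  done

lemma defin_disj: "defin P \<Longrightarrow> defin Q \<Longrightarrow> defin (\<lambda>w n. P w n \<or> Q w n)"
  using defin_neg[OF defin_conj[OF defin_neg defin_neg]] by simp

lemma defin_imp: "defin P \<Longrightarrow> defin Q \<Longrightarrow> defin (\<lambda>w n. P w n \<longrightarrow> Q w n)"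
  using defin_disj[OF defin_neg] by simp

lemma defin_ex_fin: "finite S \<Longrightarrow> (\<And>s. s \<in> S \<Longrightarrow> defin (P s)) \<Longrightarrow> defin (\<lambda>w n. \<exists>s\<in>S. P s w n)"
proof (induction S rule: finite_induct)
  case empty
  then show ?case using defin_const[of False] by simp
next
  case (insert x F)
  have "defin (\<lambda>w n. P x w n \<or> (\<exists>s\<in>F. P s w n))"
    using insert by (intro defin_disj) auto
  then show ?case by simp
qed

lemma defin_all_fin: "finite S \<Longrightarrow> (\<And>s. s \<in> S \<Longrightarrow> defin (P s)) \<Longrightarrow> defin (\<lambda>w n. \<forall>s\<in>S. P s w n)"
proof -
  assume a: "finite S" "\<And>s. s \<in> S \<Longrightarrow> defin (P s)"
  have "defin (\<lambda>w n. \<not> (\<exists>s\<in>S. \<not> P s w n))"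
    using a by (intro defin_neg defin_ex_fin) auto
  then show ?thesis by simp
qed

lemma defin_sym: "defin (\<lambda>w n. wbar w ! n = a)"
  unfolding defin_def
  by (rule exI[of _ "Sym a VX"]) (auto simp: models_at_def wbar_def)

lemma defin_past: "defin Q \<Longrightarrow> defin (\<lambda>w n. \<exists>m<n. Q w m)"
  unfolding defin_def
proof (elim exE conjE)
  fix p :: "'a option pfo"
  assume p: "is_pfo2 p" "fv p \<subseteq> {VX}"
    "\<forall>w n. n \<le> length w \<longrightarrow> Q w n = models_at (wbar w) n p"
  show "\<exists>\<phi>. is_pfo2 \<phi> \<and> fv \<phi> \<subseteq> {VX} \<and>
      (\<forall>w n. n \<le> length w \<longrightarrow> (\<exists>m<n. Q w m) = models_at (wbar w) n \<phi>)"
  proof (rule exI[of _ "ExLt VY (swp p)"], intro conjI allI impI)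
    show "is_pfo2 (ExLt VY (swp p))" using p by (simp add: pfo2_swp)
    show "fv (ExLt VY (swp p)) \<subseteq> {VX}" using p by (auto simp: fv_swp)
    fix w :: "'a list" and n assume n: "n \<le> length w"
    have "sat (wbar w) (((\<lambda>_. n)(VY := i)) \<circ> other) p = sat (wbar w) (\<lambda>_. i) p" for i
      using p(2) by (intro sat_fv) auto
    then show "(\<exists>m<n. Q w m) = models_at (wbar w) n (ExLt VY (swp p))"
      using p(3) n by (auto simp: models_at_def sat_swp)
  qed
qed



definition fdef :: "('a list \<Rightarrow> nat \<Rightarrow> 'b) \<Rightarrow> bool" where
  "fdef F \<longleftrightarrow> (\<exists>S. finite S \<and> (\<forall>w n. n \<le> length w \<longrightarrow> F w n \<in> S)) \<and> (\<forall>b. defin (\<lambda>w n. F w n = b))"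

lemma fdef_cong: assumes "fdef F" "\<And>w n. n \<le> length w \<Longrightarrow> F w n = G w n" shows "fdef G"
proof -
  obtain S where S: "finite S" "\<And>w n. n \<le> length w \<Longrightarrow> F w n \<in> S"
    using assms unfolding fdef_def by blast
  have "defin (\<lambda>w n. G w n = b)" for b
  proof -
    have "defin (\<lambda>w n. F w n = b)" using assms unfolding fdef_def by blast
    then show ?thesis by (rule defin_cong) (simp add: assms(2))
  qed
  moreover have "\<And>w n. n \<le> length w \<Longrightarrow> G w n \<in> S" using S assms(2) by simp
  ultimately show ?thesis unfolding fdef_def using S(1) by blast
qed

lemma fdef_const: "fdef (\<lambda>w n. a)"
  unfolding fdef_def using defin_const by (intro conjI exI[of _ "{a}"]) auto

lemma fdef_comp: assumes "fdef F" shows "fdef (\<lambda>w n. h (F w n))"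
proof -
  obtain S where S: "finite S" "\<And>w n. n \<le> length w \<Longrightarrow> F w n \<in> S"
    using assms unfolding fdef_def by blast
  have d: "defin (\<lambda>w n. F w n = b)" for b using assms unfolding fdef_def by blast
  have "defin (\<lambda>w n. h (F w n) = c)" for c
  proof -
    have "defin (\<lambda>w n. \<exists>s\<in>{s\<in>S. h s = c}. F w n = s)"
      using S(1) d by (intro defin_ex_fin) auto
    then show ?thesis by (rule defin_cong) (use S in auto)
  qed
  moreover have "finite (h ` S)" using S by simp
  ultimately show ?thesis unfolding fdef_def using S by blast
qed

lemma defin_fdef: "fdef F \<Longrightarrow> defin (\<lambda>w n. P (F w n))"
proof -
  assume "fdef F"
  then have "defin (\<lambda>w n. P (F w n) = True)" using fdef_comp[of F P] unfolding fdef_def by blast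
  then show ?thesis by simp
qed

lemma fdef_pair: assumes "fdef F" "fdef G" shows "fdef (\<lambda>w n. (F w n, G w n))"
proof -
  obtain S where S: "finite S" "\<And>w n. n \<le> length w \<Longrightarrow> F w n \<in> S"
    using assms unfolding fdef_def by blast
  obtain S' where S': "finite S'" "\<And>w n. n \<le> length w \<Longrightarrow> G w n \<in> S'"
    using assms unfolding fdef_def by blast
  have "defin (\<lambda>w n. (F w n, G w n) = b)" for b
  proof -
    have "defin (\<lambda>w n. F w n = fst b)" "defin (\<lambda>w n. G w n = snd b)"
      using assms unfolding fdef_def by blast+
    from defin_conj[OF this] show ?thesis by (rule defin_cong) (cases b, auto)
  qed
  then show ?thesis unfolding fdef_def using S S'
    by (intro conjI exI[of _ "S \<times> S'"]) auto
qed

lemma fdef_bind: assumes "fdef Z" "\<And>z. fdef (G z)" shows "fdef (\<lambda>w n. G (Z w n) w n)"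
proof -
  obtain S where S: "finite S" "\<And>w n. n \<le> length w \<Longrightarrow> Z w n \<in> S"
    using assms(1) unfolding fdef_def by blast
  have "\<forall>z. \<exists>S'. finite S' \<and> (\<forall>w n. n \<le> length w \<longrightarrow> G z w n \<in> S')"
    using assms(2) unfolding fdef_def by blast
  from choice[OF this] obtain R where R0: "\<forall>z. finite (R z) \<and> (\<forall>w n. n \<le> length w \<longrightarrow> G z w n \<in> R z)"
    by blast
  have R: "\<And>z. finite (R z)" "\<And>z w n. n \<le> length w \<Longrightarrow> G z w n \<in> R z"
    using R0 by auto
  have dZ: "defin (\<lambda>w n. Z w n = z)" for z using assms(1) unfolding fdef_def by blast
  have dG: "defin (\<lambda>w n. G z w n = b)" for z b using assms(2) unfolding fdef_def by blast
  have "defin (\<lambda>w n. G (Z w n) w n = b)" for b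
  proof -
    have "defin (\<lambda>w n. \<exists>z\<in>S. Z w n = z \<and> G z w n = b)"
      using S(1) by (intro defin_ex_fin defin_conj dZ dG)
    then show ?thesis by (rule defin_cong) (use S in auto)
  qed
  moreover have "finite (\<Union>z\<in>S. R z)" using S R by simp
  moreover have "\<And>w n. n \<le> length w \<Longrightarrow> G (Z w n) w n \<in> (\<Union>z\<in>S. R z)"
  proof -
    fix w :: "'a list" and n assume "n \<le> length w"
    then show "G (Z w n) w n \<in> (\<Union>z\<in>S. R z)" using S(2) R(2) by (rule_tac UN_I) auto
  qed
  ultimately show ?thesis unfolding fdef_def by (intro conjI exI[of _ "\<Union>z\<in>S. R z"]) auto
qed

lemma fdef_sym: "fdef (\<lambda>w n. wbar w ! n :: ('a::finite) option)"
  unfolding fdef_def using defin_sym by (intro conjI exI[of _ UNIV]) auto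

lemma fdef_img: assumes "fdef c" shows "fdef (\<lambda>w n. c w ` {..<n})"
proof -
  obtain S where S: "finite S" "\<And>w n. n \<le> length w \<Longrightarrow> c w n \<in> S"
    using assms unfolding fdef_def by blast
  have d: "defin (\<lambda>w n. P (c w n))" for P using defin_fdef[OF assms] .
  have "defin (\<lambda>w n. c w ` {..<n} = M)" for M
  proof (cases "M \<subseteq> S")
    case True
    then have fM: "finite M" using S(1) finite_subset by blast
    have "defin (\<lambda>w n. (\<forall>u\<in>M. \<exists>m<n. c w m = u) \<and> \<not> (\<exists>m<n. c w m \<notin> M))"
      using fM d by (intro defin_conj defin_all_fin defin_neg defin_past) auto
    then show ?thesis by (rule defin_cong) auto
  next
    case False
    have "defin (\<lambda>w n. False)" by (rule defin_const)
    moreover have "False = (c w ` {..<n} = M)" if "n \<le> length w" for w n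
    proof -
      have "c w ` {..<n} \<subseteq> S" using S(2) that by auto
      then show ?thesis using False by auto
    qed
    ultimately show ?thesis by (rule defin_cong)
  qed
  moreover have "c w ` {..<n} \<in> Pow S" if "n \<le> length w" for w n using S that by auto
  ultimately show ?thesis unfolding fdef_def using S(1) by blast
qed

lemma card_ge_Suc: "(Suc k \<le> card {j. j < (n::nat) \<and> U j}) = (\<exists>m<n. U m \<and> k \<le> card {j. j < m \<and> U j})"
proof
  assume a: "Suc k \<le> card {j. j < n \<and> U j}"
  let ?X = "{j. j < n \<and> U j}"
  have fin: "finite ?X" by (rule finite_subset[of _ "{..<n}"]) auto
  have ne: "?X \<noteq> {}" using a by (metis card.empty not_less_eq_eq zero_le)
  define m where "m = Max ?X"
  have m: "m \<in> ?X" using fin ne Max_in m_def by blast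
  have "{j. j < m \<and> U j} = ?X - {m}"
    using m Max_ge[OF fin] m_def by fastforce
  then have "card {j. j < m \<and> U j} = card ?X - 1" using m fin by simp
  then show "\<exists>m<n. U m \<and> k \<le> card {j. j < m \<and> U j}" using m a by auto
next
  assume "\<exists>m<n. U m \<and> k \<le> card {j. j < m \<and> U j}"
  then obtain m where m: "m < n" "U m" "k \<le> card {j. j < m \<and> U j}" by blast
  have "insert m {j. j < m \<and> U j} \<subseteq> {j. j < n \<and> U j}" using m by auto
  then have "card (insert m {j. j < m \<and> U j}) \<le> card {j. j < n \<and> U j}"
    by (intro card_mono) auto
  then show "Suc k \<le> card {j. j < n \<and> U j}" using m by simp
qed

lemma defin_ge: "defin U \<Longrightarrow> defin (\<lambda>w n. k \<le> card {j. j < n \<and> U w j})"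
proof (induction k)
  case 0
  then show ?case using defin_const[of True] by simp
next
  case (Suc k)
  have "defin (\<lambda>w n. \<exists>m<n. U w m \<and> k \<le> card {j. j < m \<and> U w j})"
    using Suc by (intro defin_past defin_conj) auto
  then show ?case by (rule defin_cong) (simp add: card_ge_Suc)
qed

lemma defin_card_eq: "defin U \<Longrightarrow> defin (\<lambda>w n. card {j. j < n \<and> U w j} = b)"
proof -
  assume U: "defin U"
  have "defin (\<lambda>w n. b \<le> card {j. j < n \<and> U w j} \<and> \<not> Suc b \<le> card {j. j < n \<and> U w j})"
    using U by (intro defin_conj defin_neg defin_ge)
  then show ?thesis by (rule defin_cong) auto
qed

lemma fdef_cnt: assumes U: "defin U" shows "fdef (\<lambda>w n. min (card {j. j < n \<and> U w j}) t)"
proof -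
  have "defin (\<lambda>w n. min (card {j. j < n \<and> U w j}) t = b)" for b
  proof -
    have "defin (\<lambda>w n. (b < t \<and> card {j. j < n \<and> U w j} = b) \<or> (b = t \<and> t \<le> card {j. j < n \<and> U w j}))"
      using U by (intro defin_disj defin_conj defin_const defin_ge defin_card_eq)
    then show ?thesis by (rule defin_cong) auto
  qed
  then show ?thesis unfolding fdef_def by (intro conjI exI[of _ "{..t}"]) auto
qed



lemma len_filt: "length (filter U [0..<n]) = card {j. j < (n::nat) \<and> U j}"
proof -
  have "{i. i < n \<and> U ([0..<n] ! i)} = {j. j < n \<and> U j}" by auto
  then show ?thesis by (simp add: length_filter_conv_card)
qed

lemma filt_split: assumes "m < (n::nat)" shows "[0..<n] = [0..<m] @ m # [Suc m..<n]"
  using assms by (metis le0 less_imp_le_nat upt_add_eq_append upt_conv_Cons le_add_diff_inverse)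

lemma filt_idx: assumes "m < (n::nat)" "U m"
  shows "card {j. j < m \<and> U j} < card {j. j < n \<and> U j} \<and> filter U [0..<n] ! card {j. j < m \<and> U j} = m"
proof
  have "filter U [0..<n] = filter U [0..<m] @ m # filter U [Suc m..<n]"
    using filt_split[OF assms(1)] assms(2) by simp
  then show "filter U [0..<n] ! card {j. j < m \<and> U j} = m"
    by (simp add: nth_append len_filt[symmetric])
  have "{j. j < m \<and> U j} \<subset> {j. j < n \<and> U j}" using assms by auto
  then show "card {j. j < m \<and> U j} < card {j. j < n \<and> U j}"
    by (intro psubset_card_mono) auto
qed

lemma filt_inv: assumes "i < length (filter U [0..<n])"
  shows "filter U [0..<n] ! i < n \<and> U (filter U [0..<n] ! i)
       \<and> card {j. j < filter U [0..<n] ! i \<and> U j} = i"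
proof -
  let ?m = "filter U [0..<n] ! i"
  have "?m \<in> set (filter U [0..<n])" using nth_mem[OF assms] .
  then have "?m \<in> {x \<in> set [0..<n]. U x}" by (simp only: set_filter)
  then have m: "?m < n" "U ?m" by auto
  from filt_idx[of ?m n U, OF m] have "filter U [0..<n] ! card {j. j < ?m \<and> U j} = ?m"
    and lt: "card {j. j < ?m \<and> U j} < length (filter U [0..<n])" by (auto simp: len_filt)
  have d: "distinct (filter U [0..<n])" by simp
  have "card {j. j < ?m \<and> U j} = i"
    using nth_eq_iff_index_eq[OF d lt assms] \<open>filter U [0..<n] ! card {j. j < ?m \<and> U j} = ?m\<close>
    by simp
  then show ?thesis using m by simp
qed

lemma filt_char:
  "(map c (filter U [0..<n]) = l) =
   (card {j. j < (n::nat) \<and> U j} = length l \<and>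
    (\<forall>m<n. U m \<longrightarrow> (\<exists>i<length l. card {j. j < m \<and> U j} = i \<and> c m = l ! i)))"
proof
  assume l: "map c (filter U [0..<n]) = l"
  show "card {j. j < (n::nat) \<and> U j} = length l \<and>
    (\<forall>m<n. U m \<longrightarrow> (\<exists>i<length l. card {j. j < m \<and> U j} = i \<and> c m = l ! i))"
  proof (intro conjI allI impI)
    show "card {j. j < n \<and> U j} = length l" using l len_filt[of U n] by auto
    fix m assume "m < n" "U m"
    from filt_idx[of m n U, OF this] show "\<exists>i<length l. card {j. j < m \<and> U j} = i \<and> c m = l ! i"
      using l len_filt[of U n] by auto
  qed
next
  assume r: "card {j. j < (n::nat) \<and> U j} = length l \<and>
    (\<forall>m<n. U m \<longrightarrow> (\<exists>i<length l. card {j. j < m \<and> U j} = i \<and> c m = l ! i))"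
  show "map c (filter U [0..<n]) = l"
  proof (rule nth_equalityI)
    show "length (map c (filter U [0..<n])) = length l" using r len_filt[of U n] by simp
    fix i assume "i < length (map c (filter U [0..<n]))"
    then have i: "i < length (filter U [0..<n])" by simp
    let ?m = "filter U [0..<n] ! i"
    have m: "?m < n" "U ?m" "card {j. j < ?m \<and> U j} = i" using filt_inv[OF i] by auto
    then obtain i' where "i' < length l" "card {j. j < ?m \<and> U j} = i'" "c ?m = l ! i'"
      using r by blast
    then show "map c (filter U [0..<n]) ! i = l ! i" using m(3) i by simp
  qed
qed



lemma fdef_seq: assumes U: "defin U" and c: "fdef c"
  shows "fdef (\<lambda>w n. if card {j. j < n \<and> U w j} \<le> N then map (c w) (filter (U w) [0..<n]) else [])"
proof -
  obtain S where S: "finite S" "\<And>w n. n \<le> length w \<Longrightarrow> c w n \<in> S"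
    using c unfolding fdef_def by blast
  let ?S = "{ls. set ls \<subseteq> S \<and> length ls \<le> N}"
  have fin: "finite ?S" using finite_lists_length_le[OF S(1)] .
  have mem: "(if card {j. j < n \<and> U w j} \<le> N then map (c w) (filter (U w) [0..<n]) else []) \<in> ?S"
    if "n \<le> length w" for w :: "'a list" and n
  proof (cases "card {j. j < n \<and> U w j} \<le> N")
    case True
    have "set (map (c w) (filter (U w) [0..<n])) \<subseteq> S" using S(2) that by auto
    moreover have "length (map (c w) (filter (U w) [0..<n])) \<le> N" using True len_filt by simp
    ultimately show ?thesis using True by simp
  qed simp
  have "defin (\<lambda>w n. (if card {j. j < n \<and> U w j} \<le> N then map (c w) (filter (U w) [0..<n]) else []) = l)" for l
  proof -
    have "defin (\<lambda>w n. (\<not> Suc N \<le> card {j. j < n \<and> U w j} \<and> card {j. j < n \<and> U w j} = length l \<and>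
        \<not> (\<exists>m<n. \<not> (U w m \<longrightarrow> (\<exists>i\<in>{..<length l}. card {j. j < m \<and> U w j} = i \<and> c w m = l ! i))))
       \<or> (Suc N \<le> card {j. j < n \<and> U w j} \<and> l = []))"
    proof -
      have e: "defin (\<lambda>w m. card {j. j < m \<and> U w j} = i \<and> c w m = l ! i)" for i
        using defin_conj[OF defin_card_eq[OF U] defin_fdef[OF c]] .
      have f: "defin (\<lambda>w m. \<exists>i\<in>{..<length l}. card {j. j < m \<and> U w j} = i \<and> c w m = l ! i)"
        by (rule defin_ex_fin) (auto intro: e)
      have g: "defin (\<lambda>w n. \<not> (\<exists>m<n. \<not> (U w m \<longrightarrow> (\<exists>i\<in>{..<length l}. card {j. j < m \<and> U w j} = i \<and> c w m = l ! i))))"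
        by (rule defin_neg[OF defin_past[OF defin_neg[OF defin_imp[OF U f]]]])
      show ?thesis
        by (rule defin_disj[OF defin_conj[OF defin_neg[OF defin_ge[OF U]] defin_conj[OF defin_card_eq[OF U] g]]
              defin_conj[OF defin_ge[OF U] defin_const]])
    qed
    then show ?thesis
    proof (rule defin_cong)
      fix w :: "'a list" and n
      show "((\<not> Suc N \<le> card {j. j < n \<and> U w j} \<and> card {j. j < n \<and> U w j} = length l \<and>
        \<not> (\<exists>m<n. \<not> (U w m \<longrightarrow> (\<exists>i\<in>{..<length l}. card {j. j < m \<and> U w j} = i \<and> c w m = l ! i))))
       \<or> (Suc N \<le> card {j. j < n \<and> U w j} \<and> l = [])) =
        ((if card {j. j < n \<and> U w j} \<le> N then map (c w) (filter (U w) [0..<n]) else []) = l)"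
        using filt_char[of "c w" "U w" n l] by auto
    qed
  qed
  then show ?thesis unfolding fdef_def using fin mem by blast
qed



lemma dotp_cong: "(\<And>j. j < n \<Longrightarrow> x j = x' j) \<Longrightarrow> (\<And>j. j < n \<Longrightarrow> y j = y' j) \<Longrightarrow>
  dotp A n x y = dotp A n x' y'"
  unfolding dotp_def by (intro arg_cong[where f="vsum A"] map_cong) auto

lemma dotp_restrict: "dotp A D x (restrict y {..<D}) = dotp A D x y"
  by (rule dotp_cong) auto

lemma layernorm_cong: assumes "\<And>j. j < D \<Longrightarrow> x j = y j" "d < D"
  shows "layernorm A D x d = layernorm A D y d"
proof -
  have m: "map x [0..<D] = map y [0..<D]" using assms(1) by (intro map_cong) auto
  let ?mu = "fdiv A (vsum A (map y [0..<D])) (fconst A (real D))"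
  have s: "map (\<lambda>d. fmul A (fsub A (x d) ?mu) (fsub A (x d) ?mu)) [0..<D]
         = map (\<lambda>d. fmul A (fsub A (y d) ?mu) (fsub A (y d) ?mu)) [0..<D]"
    using assms(1) by (intro map_cong) auto
  show ?thesis unfolding layernorm_def Let_def m s using assms by simp
qed

lemma ffn_cong: assumes "\<And>j. j < D \<Longrightarrow> x j = y j" shows "ffn A D P x = ffn A D P y"
proof -
  have "matvec A D (WF1 P) x = matvec A D (WF1 P) y"
    unfolding matvec_def using assms by (intro ext dotp_cong) auto
  then show ?thesis unfolding ffn_def by simp
qed

definition sc :: "fparith \<Rightarrow> nat \<Rightarrow> tlayer \<Rightarrow> (nat \<Rightarrow> ereal) \<Rightarrow> (nat \<Rightarrow> ereal) \<Rightarrow> ereal" where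
  "sc A D P q u = fdiv A (dotp A D (\<lambda>i. dotp A D (WQ P i) q) (\<lambda>i. dotp A D (WK P i) u))
      (fconst A (sqrt (real D)))"

definition vV :: "fparith \<Rightarrow> nat \<Rightarrow> tlayer \<Rightarrow> (nat \<Rightarrow> ereal) \<Rightarrow> nat \<Rightarrow> ereal" where
  "vV A D P u d = dotp A D (WV P d) u"

definition Pt :: "fparith \<Rightarrow> nat \<Rightarrow> tlayer \<Rightarrow> (nat \<Rightarrow> ereal) \<times> (nat \<Rightarrow> ereal) set \<Rightarrow> (nat \<Rightarrow> ereal) \<Rightarrow> bool" where
  "Pt A D P z u = (sc A D P (fst z) u = Max (sc A D P (fst z) ` snd z))"

definition Phi :: "fparith \<Rightarrow> nat \<Rightarrow> tlayer \<Rightarrow> nat \<Rightarrow> nat \<Rightarrow> nat \<Rightarrow> (nat \<Rightarrow> ereal) list \<Rightarrow> ereal" where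
  "Phi A D P d t1 t0 ls = (let a = fdiv A 1 (fsum A (replicate t1 1 @ replicate t0 0)) in
      if a = 0 then 0 else vsum A (map (\<lambda>u. fmul A a (vV A D P u d)) ls))"

lemma count_rep: "count_list (replicate k a) v = (if a = v then k else 0)"
  by (induction k) auto

lemma att_eq:
  fixes H :: hmat
  assumes thr: "\<forall>xs ys. (\<forall>v\<in>set xs. v \<in> Fset A \<and> v \<ge> 0) \<longrightarrow> (\<forall>v\<in>set ys. v \<in> Fset A \<and> v \<ge> 0)
        \<longrightarrow> (\<forall>v. min (count_list xs v) \<tau> = min (count_list ys v) \<tau>) \<longrightarrow> fsum A xs = fsum A ys"
    and cb: "\<forall>xs. set xs \<subseteq> {0, 1} \<longrightarrow>
        card {j. j < length xs \<and> (if xs ! j = 1 then fdiv A 1 (fsum A xs) else 0) \<noteq> 0} \<le> Nmax A"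
    and F01: "0 \<in> Fset A" "1 \<in> Fset A"
    and c_def: "c = (\<lambda>m. restrict (H m) {..<D})"
    and z_def: "z = (c n, c ` {..<n})"
  shows "aha_attention A D P H n d =
    Phi A D P d (min (card {m. m < n \<and> Pt A D P z (c m)}) \<tau>)
                (min (card {m. m < n \<and> \<not> Pt A D P z (c m)}) \<tau>)
                (if card {m. m < n \<and> Pt A D P z (c m)} \<le> Nmax A
                 then map c (filter (\<lambda>m. Pt A D P z (c m)) [0..<n]) else [])"
proof -
  define Q where "Q = (\<lambda>n. matvec A D (WQ P) (H n))"
  define K where "K = (\<lambda>n. matvec A D (WK P) (H n))"
  define V where "V = (\<lambda>n. matvec A D (WV P) (H n))"
  define S where "S = (\<lambda>n m. fdiv A (dotp A D (Q n) (K m)) (fconst A (sqrt (real D))))"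
  define tied where "tied = (\<lambda>n m. S n m = Max ((S n) ` {..<n}))"
  define ind where "ind = (\<lambda>n m. if tied n m then (1::ereal) else 0)"
  define \<alpha> where "\<alpha> = (\<lambda>n m. if tied n m then fdiv A 1 (fsum A (map (ind n) [0..<n])) else 0)"
  have att: "aha_attention A D P H n d =
      vsum A (map (\<lambda>m. fmul A (\<alpha> n m) (V m d)) (filter (\<lambda>m. \<alpha> n m \<noteq> 0) [0..<n]))"
    unfolding aha_attention_def Let_def Q_def K_def V_def S_def tied_def ind_def \<alpha>_def by simp
  have hS: "S n m = sc A D P (c n) (c m)" for m
  proof -
    have "Q n = (\<lambda>i. dotp A D (WQ P i) (c n))" unfolding Q_def matvec_def c_def dotp_restrict ..
    moreover have "K m = (\<lambda>i. dotp A D (WK P i) (c m))" unfolding K_def matvec_def c_def dotp_restrict ..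
    ultimately show ?thesis unfolding S_def sc_def by simp
  qed
  have hT: "tied n m = Pt A D P z (c m)" for m
  proof -
    have "S n ` {..<n} = sc A D P (c n) ` (c ` {..<n})" using hS by (auto simp: image_image)
    then show ?thesis unfolding tied_def Pt_def z_def using hS by simp
  qed
  have hV: "V m d = vV A D P (c m) d" for m
    unfolding V_def vV_def matvec_def c_def dotp_restrict ..
  define xs where "xs = map (ind n) [0..<n]"
  define t1 where "t1 = min (card {m. m < n \<and> Pt A D P z (c m)}) \<tau>"
  define t0 where "t0 = min (card {m. m < n \<and> \<not> Pt A D P z (c m)}) \<tau>"
  define ys where "ys = replicate t1 (1::ereal) @ replicate t0 0"
  have setxs: "set xs \<subseteq> {0, 1}" unfolding xs_def ind_def by auto
  have setys: "set ys \<subseteq> {0, 1}" unfolding ys_def by auto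
  have cnt1: "count_list xs 1 = card {m. m < n \<and> Pt A D P z (c m)}"
  proof -
    have "filter ((=) 1) xs = map (ind n) (filter (\<lambda>m. Pt A D P z (c m)) [0..<n])"
      unfolding xs_def filter_map by (intro arg_cong[where f="map (ind n)"] filter_cong) (auto simp: ind_def hT)
    then show ?thesis by (simp add: count_list_eq_length_filter len_filt)
  qed
  have cnt0: "count_list xs 0 = card {m. m < n \<and> \<not> Pt A D P z (c m)}"
  proof -
    have "filter ((=) 0) xs = map (ind n) (filter (\<lambda>m. \<not> Pt A D P z (c m)) [0..<n])"
      unfolding xs_def filter_map by (intro arg_cong[where f="map (ind n)"] filter_cong) (auto simp: ind_def hT)
    then show ?thesis by (simp add: count_list_eq_length_filter len_filt)
  qed
  have "min (count_list xs v) \<tau> = min (count_list ys v) \<tau>" for v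
  proof -
    consider "v = 1" | "v = 0" | "v \<noteq> 0 \<and> v \<noteq> 1" by blast
    then show ?thesis
    proof cases
      case 1 then show ?thesis unfolding ys_def t1_def by (simp add: cnt1 count_rep)
    next
      case 2 then show ?thesis unfolding ys_def t0_def by (simp add: cnt0 count_rep)
    next
      case 3
      then have "v \<notin> set xs" "v \<notin> set ys" using setxs setys by auto
      then show ?thesis by simp
    qed
  qed
  moreover have "\<forall>v\<in>set xs. v \<in> Fset A \<and> v \<ge> 0" using setxs F01 by auto
  moreover have "\<forall>v\<in>set ys. v \<in> Fset A \<and> v \<ge> 0" using setys F01 by auto
  ultimately have fs: "fsum A xs = fsum A ys" using thr by blast
  define a where "a = fdiv A 1 (fsum A xs)"
  have al: "\<alpha> n m = (if Pt A D P z (c m) then a else 0)" for m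
    unfolding \<alpha>_def a_def xs_def using hT by simp
  have Phi_eq: "Phi A D P d t1 t0 ls = (if a = 0 then 0 else vsum A (map (\<lambda>u. fmul A a (vV A D P u d)) ls))" for ls
    unfolding Phi_def a_def fs ys_def Let_def ..
  show ?thesis
  proof (cases "a = 0")
    case True
    have "filter (\<lambda>m. \<alpha> n m \<noteq> 0) [0..<n] = []" using True al by simp
    then show ?thesis unfolding att t1_def[symmetric] t0_def[symmetric] Phi_eq using True
      by (simp add: vsum_def)
  next
    case False
    have fe: "filter (\<lambda>m. \<alpha> n m \<noteq> 0) [0..<n] = filter (\<lambda>m. Pt A D P z (c m)) [0..<n]"
      using False al by (intro filter_cong) auto
    have "{j. j < length xs \<and> (if xs ! j = 1 then fdiv A 1 (fsum A xs) else 0) \<noteq> 0}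
        = {j. j < n \<and> Pt A D P z (c j)}"
      using False unfolding xs_def a_def by (auto simp: ind_def hT split: if_splits)
    then have "card {j. j < n \<and> Pt A D P z (c j)} \<le> Nmax A" using cb setxs by metis
    have mm: "map (\<lambda>m. fmul A (\<alpha> n m) (V m d)) (filter (\<lambda>m. Pt A D P z (c m)) [0..<n])
        = map (\<lambda>m. fmul A a (vV A D P (c m) d)) (filter (\<lambda>m. Pt A D P z (c m)) [0..<n])"
      by (intro map_cong) (auto simp: al hV)
    show ?thesis unfolding att fe mm t1_def[symmetric] t0_def[symmetric] Phi_eq
      using False \<open>card {j. j < n \<and> Pt A D P z (c j)} \<le> Nmax A\<close> by (simp add: comp_def)
  qed
qed



definition col :: "fparith \<Rightarrow> 'a transformer \<Rightarrow> nat \<Rightarrow> 'a list \<Rightarrow> nat \<Rightarrow> nat \<Rightarrow> ereal" where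
  "col A T k w n = restrict (hidden A T w k n) {..<width T}"

lemma fp_parts:
  assumes "fixed_precision A"
  shows "0 \<in> Fset A" "1 \<in> Fset A"
    "\<forall>xs. set xs \<subseteq> {0, 1} \<longrightarrow>
        card {j. j < length xs \<and> (if xs ! j = 1 then fdiv A 1 (fsum A xs) else 0) \<noteq> 0} \<le> Nmax A"
    "\<exists>\<tau>::nat. \<forall>xs ys. (\<forall>v\<in>set xs. v \<in> Fset A \<and> v \<ge> 0) \<longrightarrow> (\<forall>v\<in>set ys. v \<in> Fset A \<and> v \<ge> 0)
        \<longrightarrow> (\<forall>v. min (count_list xs v) \<tau> = min (count_list ys v) \<tau>) \<longrightarrow> fsum A xs = fsum A ys"
  using assms unfolding fixed_precision_def by auto

lemma fdef_col:
  fixes T :: "('a::finite) transformer"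
  assumes fp: "fixed_precision A"
  shows "fdef (\<lambda>w n. col A T k w n)"
proof (induction k)
  case 0
  have "fdef (\<lambda>w n. restrict (emb T (wbar w ! n)) {..<width T})"
    by (rule fdef_comp[OF fdef_sym])
  then show ?case by (rule fdef_cong) (auto simp: col_def restrict_def)
next
  case (Suc k)
  define D where "D = width T"
  define P where "P = layers T (k div 2)"
  define c where "c = (\<lambda>w. col A T k w)"
  have c: "fdef c" using Suc unfolding c_def .
  have cH: "c w m = restrict (hidden A T w k m) {..<D}" for w m unfolding c_def col_def D_def ..
  show ?case
  proof (cases "even k")
    case True
    obtain \<tau> :: nat where thr: "\<forall>xs ys. (\<forall>v\<in>set xs. v \<in> Fset A \<and> v \<ge> 0) \<longrightarrow> (\<forall>v\<in>set ys. v \<in> Fset A \<and> v \<ge> 0)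
        \<longrightarrow> (\<forall>v. min (count_list xs v) \<tau> = min (count_list ys v) \<tau>) \<longrightarrow> fsum A xs = fsum A ys"
      using fp_parts(4)[OF fp] by blast
    define Z where "Z = (\<lambda>w n. (c w n, c w ` {..<n}))"
    define G where "G = (\<lambda>z w n. (z, min (card {m. m < n \<and> Pt A D P z (c w m)}) \<tau>,
        min (card {m. m < n \<and> \<not> Pt A D P z (c w m)}) \<tau>,
        if card {m. m < n \<and> Pt A D P z (c w m)} \<le> Nmax A
                 then map (c w) (filter (\<lambda>m. Pt A D P z (c w m)) [0..<n]) else []))"
    have fZ: "fdef Z" unfolding Z_def by (intro fdef_pair c fdef_img)
    have fG: "fdef (G z)" for z
    proof -
      have U: "defin (\<lambda>w m. Pt A D P z (c w m))" by (rule defin_fdef[OF c])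
      have U': "defin (\<lambda>w m. \<not> Pt A D P z (c w m))" by (rule defin_fdef[OF c])
      show ?thesis unfolding G_def
        by (intro fdef_pair fdef_const fdef_cnt U U' fdef_seq c)
    qed
    have ff: "fdef (\<lambda>w n. G (Z w n) w n)" by (rule fdef_bind[OF fZ fG])
    define hL where "hL = (\<lambda>(z::(nat \<Rightarrow> ereal) \<times> (nat \<Rightarrow> ereal) set, t1::nat, t0::nat, ls::(nat \<Rightarrow> ereal) list).
       restrict (layernorm A D (\<lambda>d. fadd A (Phi A D P d t1 t0 ls) (fst z d))) {..<D})"
    have "fdef (\<lambda>w n. hL (G (Z w n) w n))" by (rule fdef_comp[OF ff])
    then show ?thesis
    proof (rule fdef_cong)
      fix w :: "'a list" and n
      have att: "aha_attention A D P (hidden A T w k) n d =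
        Phi A D P d (min (card {m. m < n \<and> Pt A D P (Z w n) (c w m)}) \<tau>)
                (min (card {m. m < n \<and> \<not> Pt A D P (Z w n) (c w m)}) \<tau>)
                (if card {m. m < n \<and> Pt A D P (Z w n) (c w m)} \<le> Nmax A
                 then map (c w) (filter (\<lambda>m. Pt A D P (Z w n) (c w m)) [0..<n]) else [])" for d
        by (rule att_eq[OF thr fp_parts(3)[OF fp] fp_parts(1,2)[OF fp]])
           (auto simp: cH Z_def)
      show "hL (G (Z w n) w n) = col A T (Suc k) w n"
        unfolding col_def hidden.simps Let_def D_def[symmetric] P_def[symmetric] if_P[OF True]
      proof (rule ext)
        fix d
        show "hL (G (Z w n) w n) d = restrict (layernorm A D
            (\<lambda>d. fadd A (aha_attention A D P (hidden A T w k) n d) (hidden A T w k n d))) {..<D} d"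
        proof (cases "d < D")
          case True
          show ?thesis unfolding hL_def G_def using True
            apply (simp split del: if_split)
            apply (rule layernorm_cong)
             apply (simp only: att)
             apply (simp add: Z_def cH split del: if_split)
            apply simp
            done
        qed (simp add: hL_def G_def)
      qed
    qed
  next
    case False
    define hF where "hF = (\<lambda>u. restrict (layernorm A D (\<lambda>d. fadd A (ffn A D P u d) (u d))) {..<D})"
    have "fdef (\<lambda>w n. hF (c w n))" by (rule fdef_comp[OF c])
    then show ?thesis
    proof (rule fdef_cong)
      fix w :: "'a list" and n
      have ff: "ffn A D P (c w n) = ffn A D P (hidden A T w k n)"
        by (rule ffn_cong) (simp add: cH)
      show "hF (c w n) = col A T (Suc k) w n"
        unfolding col_def hidden.simps Let_def D_def[symmetric] P_def[symmetric] if_not_P[OF False]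
      proof (rule ext)
        fix d
        show "hF (c w n) d = restrict (layernorm A D
            (\<lambda>d. fadd A (ffn A D P (hidden A T w k n) d) (hidden A T w k n d))) {..<D} d"
        proof (cases "d < D")
          case True
          show ?thesis unfolding hF_def ff using True
            by simp (rule layernorm_cong, auto simp: cH)
        qed (simp add: hF_def)
      qed
    qed
  qed
qed

theorem mainTheorem15:
  fixes A :: fparith and T :: "('a::finite) transformer"
  assumes "fixed_precision A" and "wf_transformer A T"
  shows "(\<forall>k \<le> 2 * depth T. simulated_PFO2 (Fset A) (width T) (\<lambda>w. hidden A T w k))
       \<and> simulated_PFO2_scalar (Fset A) (tf_output A T :: 'a list \<Rightarrow> ereal)"
proof (intro conjI allI impI)
  fix k
  show "simulated_PFO2 (Fset A) (width T) (\<lambda>w. hidden A T w k)"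
    unfolding simulated_PFO2_def
  proof (intro allI impI ballI)
    fix d f assume d: "d < width T"
    have "defin (\<lambda>w n. col A T k w n d = f)"
      by (rule defin_fdef[OF fdef_col[OF assms(1)]])
    then obtain \<phi> :: "'a option pfo" where \<phi>: "is_pfo2 \<phi>" "fv \<phi> \<subseteq> {VX}"
      "\<forall>w n. n \<le> length w \<longrightarrow> (col A T k w n d = f) = models_at (wbar w) n \<phi>"
      unfolding defin_def by blast
    show "\<exists>\<phi> :: 'a option pfo. is_pfo2 \<phi> \<and> fv \<phi> \<subseteq> {VX} \<and>
        (\<forall>w. \<forall>n \<le> length w. hidden A T w k n d = f \<longleftrightarrow> models_at (wbar w) n \<phi>)"
      using \<phi> d by (intro exI[of _ \<phi>]) (simp add: col_def)
  qed
next
  show "simulated_PFO2_scalar (Fset A) (tf_output A T :: 'a list \<Rightarrow> ereal)"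
    unfolding simulated_PFO2_scalar_def
  proof (intro ballI)
    fix f
    let ?h = "\<lambda>u. fadd A (dotp A (width T) (theta T) u) (bout T)"
    have "defin (\<lambda>w n. ?h (col A T (2 * depth T) w n) = f)"
      by (rule defin_fdef[OF fdef_col[OF assms(1)]])
    then obtain \<phi> :: "'a option pfo" where \<phi>: "is_pfo2 \<phi>" "fv \<phi> \<subseteq> {VX}"
      "\<forall>w n. n \<le> length w \<longrightarrow> (?h (col A T (2 * depth T) w n) = f) = models_at (wbar w) n \<phi>"
      unfolding defin_def by blast
    show "\<exists>\<phi> :: 'a option pfo. is_pfo2 \<phi> \<and> fv \<phi> \<subseteq> {VX} \<and>
        (\<forall>w. tf_output A T w = f \<longleftrightarrow> models_at (wbar w) (length w) \<phi>)"
      using \<phi> by (intro exI[of _ \<phi>]) (simp add: col_def tf_output_def dotp_restrict)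
  qed
qed

end
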